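(* For every $T$, every sequence of forecasts $\mathbf p\in[0,1]^T$ and every sequence of outcomes $\mathbf x\in\{0,1\}^T$, $$\tfrac12\,\mathrm{MaxAgentReg}(\mathbf p,\mathbf x)\le \mathrm{VCal}(\mathbf p,\mathbf x)\le \mathrm{MaxAgentReg}(\mathbf p,\mathbf x).$$
   Context: A binary scoring rule is $\ell:[0,1]\times\{0,1\}\to\mathbb R$; with $\ell(p;q)=(1-q)\ell(p,0)+q\ell(p,1)$ it is proper if $\ell(p;p)\le\ell(p';p)$ for all $p,p'$. Let $\mathcal L$ be the set of proper scoring rules with values in $[-1,1]$. For $\beta=\frac1T\sum_tx_t$, $\mathrm{Reg}_\ell(\mathbf p,\mathbf x)=\sum_t\ell(p_t,x_t)-\sum_t\ell(\beta,x_t)$, and the U-calibration error is $\mathrm{MaxAgentReg}(\mathbf p,\mathbf x)=\sup_{\ell\in\mathcal L}\mathrm{Reg}_\ell(\mathbf p,\mathbf x)$. For $v\in[0,1]$ the V-shaped scoring rule $\ell_v$ is defined by $\ell_v(p,0)=v\,\mathrm{sgn}(p-v)$ and $\ell_v(p,1)=(1-v)\,\mathrm{sgn}(v-p)$, where $\mathrm{sgn}(0)=0$; its univariate form is $\ell_v(p;p)=-|p-v|$. The V-calibration error is $\mathrm{VCal}(\mathbf p,\mathbf x)=\sup_{v\in[0,1]}\mathrm{Reg}_{\ell_v}(\mathbf p,\mathbf x)$. *)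

theory Defs
  imports "HOL-Analysis.Analysis"
begin

(* A binary scoring rule: l p y for forecast p and outcome y (True = 1, False = 0). *)
type_synonym scoring_rule = "real \<Rightarrow> bool \<Rightarrow> real"

definition exp_score :: "scoring_rule \<Rightarrow> real \<Rightarrow> real \<Rightarrow> real" where
  "exp_score l p q = (1 - q) * l p False + q * l p True"

definition proper :: "scoring_rule \<Rightarrow> bool" where
  "proper l \<longleftrightarrow> (\<forall>p\<in>{0..1}. \<forall>p'\<in>{0..1}. exp_score l p p \<le> exp_score l p' p)"

definition bounded_proper_rules :: "scoring_rule set" where
  "bounded_proper_rules = {l. proper l \<and> (\<forall>p\<in>{0..1}. \<forall>y. l p y \<in> {-1..1})}"

definition of_outcome :: "bool \<Rightarrow> real" where
  "of_outcome y = (if y then 1 else 0)"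

definition beta :: "nat \<Rightarrow> (nat \<Rightarrow> bool) \<Rightarrow> real" where
  "beta T x = (\<Sum>t<T. of_outcome (x t)) / real T"

definition Reg :: "scoring_rule \<Rightarrow> nat \<Rightarrow> (nat \<Rightarrow> real) \<Rightarrow> (nat \<Rightarrow> bool) \<Rightarrow> real" where
  "Reg l T p x = (\<Sum>t<T. l (p t) (x t)) - (\<Sum>t<T. l (beta T x) (x t))"

definition MaxAgentReg :: "nat \<Rightarrow> (nat \<Rightarrow> real) \<Rightarrow> (nat \<Rightarrow> bool) \<Rightarrow> real" where
  "MaxAgentReg T p x = (SUP l\<in>bounded_proper_rules. Reg l T p x)"

definition vshaped :: "real \<Rightarrow> scoring_rule" where
  "vshaped v p y = (if y then (1 - v) * sgn (v - p) else v * sgn (p - v))"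

definition VCal :: "nat \<Rightarrow> (nat \<Rightarrow> real) \<Rightarrow> (nat \<Rightarrow> bool) \<Rightarrow> real" where
  "VCal T p x = (SUP v\<in>{0..1}. Reg (vshaped v) T p x)"

end

theory Submission imports Defs begin

lemma vshaped_alt: "vshaped v q y = sgn (v - q) * (of_outcome y - v)"
  by (cases "v < q"; cases "v = q"; auto simp: vshaped_def of_outcome_def algebra_simps)

lemma Reg_cong:
  assumes "\<forall>t<T. \<forall>y. r (p t) y = r' (p t) y" "\<forall>y. r (beta T x) y = r' (beta T x) y"
  shows "Reg r T p x = Reg r' T p x"
  unfolding Reg_def using assms by simp

lemma Reg_linear:
  "Reg (\<lambda>q y. c y + (\<Sum>j\<in>J. W j * \<rho> j q y)) T p x = (\<Sum>j\<in>J. W j * Reg (\<rho> j) T p x)"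
  unfolding Reg_def
  by (simp add: sum.distrib sum_distrib_left sum_subtractf right_diff_distrib sum.swap[of _ J])

lemma beta_range: "beta T x \<in> {0..1}"
proof -
  have "(\<Sum>t<T. of_outcome (x t)) \<le> (\<Sum>t<T. 1)"
    by (intro sum_mono) (simp add: of_outcome_def)
  moreover have "(\<Sum>t<T. of_outcome (x t)) \<ge> 0"
    by (intro sum_nonneg) (simp add: of_outcome_def)
  ultimately show ?thesis unfolding beta_def
    by (cases "T = 0") (auto simp: divide_le_eq)
qed

lemma beta_pos: assumes "t < T" "x t" shows "beta T x > 0"
proof -
  have "(\<Sum>t<T. of_outcome (x t)) \<ge> of_outcome (x t)"
    by (rule member_le_sum) (use assms in \<open>auto simp: of_outcome_def\<close>)
  then have "(\<Sum>t<T. of_outcome (x t)) > 0" using assms by (simp add: of_outcome_def)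
  then show ?thesis using assms unfolding beta_def by simp
qed

lemma Reg_bound:
  assumes "\<forall>t<T. p t \<in> {0..1}" "\<forall>q\<in>{0..1}. \<forall>y. \<bar>r q y\<bar> \<le> 1"
  shows "Reg r T p x \<le> 2 * T"
proof -
  have "(\<Sum>t<T. r (p t) (x t)) \<le> (\<Sum>t<T. 1)"
    by (intro sum_mono) (use assms in \<open>auto simp: abs_le_iff\<close>)
  moreover have "-(\<Sum>t<T. r (beta T x) (x t)) \<le> (\<Sum>t<T. 1)"
    unfolding sum_negf[symmetric]
    by (intro sum_mono) (use assms beta_range in \<open>auto simp: abs_le_iff\<close>)
  ultimately show ?thesis unfolding Reg_def by simp
qed

lemma vshaped_in: assumes "v \<in> {0..1}" shows "vshaped v \<in> bounded_proper_rules"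
proof -
  have es: "exp_score (vshaped v) a q = sgn (v-a) * (q - v)" for a q
    by (simp add: exp_score_def vshaped_alt of_outcome_def algebra_simps)
  have "proper (vshaped v)"
    unfolding proper_def es
    by (auto simp: sgn_if)
  moreover have "\<forall>q\<in>{0..1}. \<forall>y. vshaped v q y \<in> {-1..1}"
    using assms by (auto simp: vshaped_def sgn_if)
  ultimately show ?thesis unfolding bounded_proper_rules_def by simp
qed

lemma VCal_bdd:
  assumes "\<forall>t<T. p t \<in> {0..1}"
  shows "bdd_above ((\<lambda>v. Reg (vshaped v) T p x) ` {0..1})"
proof (rule bdd_aboveI2)
  fix v :: real assume "v \<in> {0..1}"
  then have "\<forall>q\<in>{0..1}. \<forall>y. \<bar>vshaped v q y\<bar> \<le> 1"
    using vshaped_in[of v] unfolding bounded_proper_rules_def by (auto simp: abs_le_iff)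
  then show "Reg (vshaped v) T p x \<le> 2 * T" using Reg_bound assms by blast
qed

lemma MAR_bdd:
  assumes "\<forall>t<T. p t \<in> {0..1}"
  shows "bdd_above ((\<lambda>l. Reg l T p x) ` bounded_proper_rules)"
proof (rule bdd_aboveI2)
  fix l assume "l \<in> bounded_proper_rules"
  then have "\<forall>q\<in>{0..1}. \<forall>y. \<bar>l q y\<bar> \<le> 1"
    unfolding bounded_proper_rules_def by (auto simp: abs_le_iff)
  then show "Reg l T p x \<le> 2 * T" using Reg_bound assms by blast
qed

lemma VCal_nonneg:
  assumes "\<forall>t<T. p t \<in> {0..1}"
  shows "VCal T p x \<ge> 0"
proof -
  have "Reg (vshaped 0) T p x \<ge> 0"
    unfolding Reg_def
  proof -
    have "(\<Sum>t<T. vshaped 0 (beta T x) (x t)) \<le> (\<Sum>t<T. vshaped 0 (p t) (x t))"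
    proof (intro sum_mono)
      fix t assume t: "t \<in> {..<T}"
      show "vshaped 0 (beta T x) (x t) \<le> vshaped 0 (p t) (x t)"
      proof (cases "x t")
        case True
        then have "beta T x > 0" using beta_pos t by auto
        then show ?thesis using True by (auto simp: vshaped_def sgn_if)
      qed (auto simp: vshaped_def)
    qed
    then show "0 \<le> (\<Sum>t<T. vshaped 0 (p t) (x t)) - (\<Sum>t<T. vshaped 0 (beta T x) (x t))" by simp
  qed
  also have "\<dots> \<le> VCal T p x" unfolding VCal_def
    by (rule cSUP_upper) (use VCal_bdd assms in auto)
  finally show ?thesis .
qed


lemma gap_le_VCal:
  assumes P: "\<forall>t<T. p t \<in> {0..1}"
    and ab: "0 \<le> a" "a < b" "b \<le> 1" and v: "a \<le> v" "v \<le> b"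
    and pts: "\<forall>t<T. p t \<le> a \<or> p t \<ge> b" "beta T x \<le> a \<or> beta T x \<ge> b"
  shows "Reg (\<lambda>q y. (if q \<le> a then 1 else -1) * (of_outcome y - v)) T p x \<le> VCal T p x"
proof (rule field_le_epsilon)
  fix e :: real assume e: "e > 0"
  define \<sigma> :: "real \<Rightarrow> real" where "\<sigma> q = (if q \<le> a then 1 else -1)" for q
  define th where "th = min 1 (e / (2 * T + 1))"
  have th: "0 < th" "th \<le> 1" "th * (2 * T) \<le> e"
  proof -
    show "0 < th" "th \<le> 1" using e by (auto simp: th_def)
    have "th \<le> e / (2 * T + 1)" by (simp add: th_def)
    then have "th * (2 * T + 1) \<le> e" by (simp add: le_divide_eq add_pos_nonneg)
    then show "th * (2 * T) \<le> e" using \<open>0 < th\<close> by (simp add: algebra_simps)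
  qed
  define w where "w = (1 - th) * v + th * ((a + b) / 2)"
  have "w - a = (1 - th) * (v - a) + th * ((b - a) / 2)" "b - w = (1 - th) * (b - v) + th * ((b - a) / 2)"
    by (simp_all add: w_def field_simps)
  moreover have "(1 - th) * (v - a) \<ge> 0" "(1 - th) * (b - v) \<ge> 0" "th * ((b - a) / 2) > 0"
    using th v ab by auto
  ultimately have wa: "a < w" and wb: "w < b" by linarith+
  have wv: "\<bar>w - v\<bar> \<le> th"
  proof -
    have "w - v = th * ((a + b) / 2 - v)" by (simp add: w_def algebra_simps)
    moreover have "\<bar>(a + b) / 2 - v\<bar> \<le> 1" using ab v by (simp add: abs_le_iff field_simps)
    ultimately show ?thesis using th by (simp add: abs_mult mult_left_le)
  qed
  have w01: "w \<in> {0..1}" using wa wb ab by auto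
  have sg: "sgn (w - q) = \<sigma> q" if "q \<le> a \<or> q \<ge> b" for q
    using that wa wb by (auto simp: \<sigma>_def sgn_if)
  have eq: "Reg (vshaped w) T p x = Reg (\<lambda>q y. \<sigma> q * (of_outcome y - w)) T p x"
    by (rule Reg_cong) (use pts sg in \<open>auto simp: vshaped_alt\<close>)
  have "Reg (vshaped w) T p x \<le> VCal T p x" unfolding VCal_def
    using cSUP_upper[OF w01 VCal_bdd[OF P, of x]] by simp
  with eq have 1: "Reg (\<lambda>q y. \<sigma> q * (of_outcome y - w)) T p x \<le> VCal T p x" by simp
  have 2: "Reg (\<lambda>q y. \<sigma> q * (of_outcome y - v)) T p x
      = Reg (\<lambda>q y. \<sigma> q * (of_outcome y - w)) T p x + (w - v) * (\<Sum>t<T. \<sigma> (p t) - \<sigma> (beta T x))"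
    unfolding Reg_def by (simp add: algebra_simps sum.distrib sum_distrib_left sum_subtractf)
  have "\<bar>\<Sum>t<T. \<sigma> (p t) - \<sigma> (beta T x)\<bar> \<le> (\<Sum>t<T. 2)"
    by (rule order_trans[OF sum_abs], rule sum_mono) (auto simp: \<sigma>_def)
  then have "\<bar>\<Sum>t<T. \<sigma> (p t) - \<sigma> (beta T x)\<bar> \<le> 2 * T" by simp
  then have "\<bar>(w - v) * (\<Sum>t<T. \<sigma> (p t) - \<sigma> (beta T x))\<bar> \<le> th * (2 * T)"
    unfolding abs_mult using wv by (intro mult_mono) auto
  then show "Reg (\<lambda>q y. (if q \<le> a then 1 else -1) * (of_outcome y - v)) T p x \<le> VCal T p x + e"
    using 1 2 th unfolding \<sigma>_def by (smt (verit) abs_le_iff)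
qed


lemma main_bound:
  assumes P: "\<forall>t<T. p t \<in> {0..1}" and l: "l \<in> bounded_proper_rules"
  shows "Reg l T p x \<le> 2 * VCal T p x"
proof -
  define PP where "PP = insert (beta T x) (p ` {..<T})"
  have finP: "finite PP" by (simp add: PP_def)
  have P01: "PP \<subseteq> {0..1}" using P beta_range by (auto simp: PP_def)
  define ss where "ss = sorted_list_of_set PP"
  define m where "m = length ss"
  define s where "s k = ss ! k" for k
  have setss: "set ss = PP" using finP by (simp add: ss_def)
  have sw: "sorted_wrt (<) ss" by (simp add: ss_def)
  have smono: "s i < s j" if "i < j" "j < m" for i j
    using sorted_wrt_nth_less[OF sw that(1)] that by (simp add: s_def m_def)
  have sle: "s i \<le> s j \<longleftrightarrow> i \<le> j" if "i < m" "j < m" for i j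
    using smono[of i j] smono[of j i] that by (cases i j rule: linorder_cases) auto
  have sin: "s k \<in> PP" if "k < m" for k
    using that setss by (auto simp: s_def m_def)
  have s01: "s k \<in> {0..1}" if "k < m" for k using sin[OF that] P01 by auto
  have Pex: "\<exists>k<m. a = s k" if "a \<in> PP" for a
    using that setss by (auto simp: s_def m_def in_set_conv_nth)
  have m0: "m > 0" using Pex[of "beta T x"] by (auto simp: PP_def)
  define L where "L a = l a False" for a
  define g where "g a = l a True - l a False" for a
  have lLg: "l a y = L a + of_outcome y * g a" for a y
    by (cases y) (auto simp: L_def g_def of_outcome_def)
  have propr: "L a + a * g a \<le> L b + a * g b" if "a \<in> {0..1}" "b \<in> {0..1}" for a b
  proof -
    have "exp_score l a a \<le> exp_score l b a"
      using l that unfolding bounded_proper_rules_def proper_def by blast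
    then show ?thesis by (simp add: exp_score_def L_def g_def algebra_simps)
  qed
  have gbd: "\<bar>g a\<bar> \<le> 2" if "a \<in> {0..1}" for a
  proof -
    have "l a True \<in> {-1..1}" "l a False \<in> {-1..1}"
      using l that unfolding bounded_proper_rules_def by auto
    then show ?thesis unfolding g_def by (auto simp: abs_le_iff)
  qed
  define W where "W j = (g (s j) - g (s (Suc j))) / 2" for j
  define v where "v j = (if W j = 0 then s j else (L (s (Suc j)) - L (s j)) / (2 * W j))" for j
  have gap: "W j \<ge> 0 \<and> 2 * W j * v j = L (s (Suc j)) - L (s j) \<and> s j \<le> v j \<and> v j \<le> s (Suc j)"
    if j: "Suc j < m" for j
  proof -
    define a where "a = s j"
    define b where "b = s (Suc j)"
    have ab: "a < b" "a \<in> {0..1}" "b \<in> {0..1}" using smono[of j "Suc j"] s01 j by (auto simp: a_def b_def)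
    have 1: "a * (g a - g b) \<le> L b - L a" using propr[of a b] ab by (simp add: algebra_simps)
    have 2: "L b - L a \<le> b * (g a - g b)" using propr[of b a] ab by (simp add: algebra_simps)
    have "(b - a) * (g a - g b) \<ge> 0" using 1 2 by (simp add: algebra_simps)
    then have D: "g a - g b \<ge> 0" using ab by (simp add: zero_le_mult_iff)
    show ?thesis
    proof (cases "g a - g b = 0")
      case True
      then show ?thesis using 1 2 ab by (simp add: W_def v_def a_def[symmetric] b_def[symmetric])
    next
      case False
      then have Dp: "g a - g b > 0" using D by simp
      have "W j = (g a - g b) / 2" by (simp add: W_def a_def b_def)
      then have Wj: "2 * W j = g a - g b" "W j \<noteq> 0" using Dp by auto
      have vj: "v j = (L b - L a) / (g a - g b)"
        using Wj by (simp add: v_def a_def[symmetric] b_def[symmetric])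
      show ?thesis using Dp 1 2 Wj
        by (simp add: vj a_def[symmetric] b_def[symmetric] le_divide_eq divide_le_eq mult.commute)
    qed
  qed
  define \<rho> where "\<rho> j q y = (if q \<le> s j then 1 else -1) * (of_outcome y - v j)" for j q y
  have tele: "l (s k) y - l (s 0) y = - (\<Sum>j<k. 2 * W j * (of_outcome y - v j))" if "k < m" for k y
    using that
  proof (induction k)
    case 0 then show ?case by simp
  next
    case (Suc k)
    have "l (s (Suc k)) y - l (s k) y = - (2 * W k * (of_outcome y - v k))"
    proof -
      have e1: "2 * W k * v k = L (s (Suc k)) - L (s k)" using gap[OF Suc.prems] by simp
      have e2: "2 * W k * of_outcome y = (g (s k) - g (s (Suc k))) * of_outcome y" by (simp add: W_def)
      show ?thesis unfolding lLg right_diff_distrib e1 e2 by (simp add: algebra_simps)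
    qed
    then show ?case using Suc by simp
  qed
  define c where "c y = l (s 0) y - (\<Sum>j<m-1. W j * \<rho> j (s 0) y)" for y
  have rep: "l (s k) y = c y + (\<Sum>j<m-1. W j * \<rho> j q y)" if "k < m" "q = s k" for k q y
  proof -
    have r: "W j * \<rho> j (s k) y = W j * \<rho> j (s 0) y - (if j < k then 2 * W j * (of_outcome y - v j) else 0)"
      if "j < m - 1" for j
      using that \<open>k < m\<close> sle[of k j] sle[of 0 j] by (auto simp: \<rho>_def algebra_simps)
    have "(\<Sum>j<m-1. W j * \<rho> j (s k) y) = (\<Sum>j<m-1. W j * \<rho> j (s 0) y)
        - (\<Sum>j<m-1. (if j < k then 2 * W j * (of_outcome y - v j) else 0))"
      by (simp add: r sum_subtractf)
    also have "(\<Sum>j<m-1. (if j < k then 2 * W j * (of_outcome y - v j) else 0)) = (\<Sum>j<k. 2 * W j * (of_outcome y - v j))"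
    proof -
      have "{..<m-1} \<inter> {j. j < k} = {..<k}" using \<open>k < m\<close> by auto
      then show ?thesis by (simp add: sum.If_cases)
    qed
    finally show ?thesis using tele[OF \<open>k < m\<close>, of y] that by (simp add: c_def)
  qed
  have "Reg l T p x = Reg (\<lambda>q y. c y + (\<Sum>j<m-1. W j * \<rho> j q y)) T p x"
  proof (rule Reg_cong)
    show "\<forall>t<T. \<forall>y. l (p t) y = c y + (\<Sum>j<m-1. W j * \<rho> j (p t) y)"
    proof (intro allI impI)
      fix t y assume "t < T"
      then obtain k where "k < m" "p t = s k" using Pex[of "p t"] by (auto simp: PP_def)
      then show "l (p t) y = c y + (\<Sum>j<m-1. W j * \<rho> j (p t) y)" using rep by simp
    qed
    show "\<forall>y. l (beta T x) y = c y + (\<Sum>j<m-1. W j * \<rho> j (beta T x) y)"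
    proof
      fix y
      obtain k where "k < m" "beta T x = s k" using Pex[of "beta T x"] by (auto simp: PP_def)
      then show "l (beta T x) y = c y + (\<Sum>j<m-1. W j * \<rho> j (beta T x) y)" using rep by simp
    qed
  qed
  also have "\<dots> = (\<Sum>j<m-1. W j * Reg (\<rho> j) T p x)" by (rule Reg_linear)
  also have "\<dots> \<le> (\<Sum>j<m-1. W j * VCal T p x)"
  proof (rule sum_mono)
    fix j assume "j \<in> {..<m-1}"
    then have j: "Suc j < m" by auto
    have sep: "q \<le> s j \<or> q \<ge> s (Suc j)" if qP: "q \<in> PP" for q
    proof -
      obtain k where k: "k < m" "q = s k" using Pex[OF qP] by blast
      show ?thesis using sle[of k j] sle[of "Suc j" k] k j by auto
    qed
    have "Reg (\<rho> j) T p x \<le> VCal T p x"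
      unfolding \<rho>_def
      by (rule gap_le_VCal[OF P]) (use gap[OF j] smono[of j "Suc j"] j s01[of j] s01[of "Suc j"] sep in \<open>auto simp: PP_def\<close>)
    then show "W j * Reg (\<rho> j) T p x \<le> W j * VCal T p x"
      using gap[OF j] by (simp add: mult_left_mono)
  qed
  also have "\<dots> = (\<Sum>j<m-1. W j) * VCal T p x" by (simp add: sum_distrib_right)
  also have "\<dots> \<le> 2 * VCal T p x"
  proof (rule mult_right_mono)
    have "(\<Sum>j<m-1. W j) = (\<Sum>j<m-1. (g (s j) - g (s (Suc j)))) / 2"
      by (simp add: W_def sum_divide_distrib)
    also have "\<dots> = (g (s 0) - g (s (m-1))) / 2"
      by (simp only: sum_lessThan_telescope'[of "\<lambda>j. g (s j)"])
    also have "\<dots> \<le> 2" using gbd[OF s01[of 0]] gbd[OF s01[of "m-1"]] m0 by (simp add: abs_le_iff)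
    finally show "(\<Sum>j<m-1. W j) \<le> 2" .
    show "0 \<le> VCal T p x" using VCal_nonneg[OF P] .
  qed
  finally show ?thesis .
qed

theorem theorem4p2:
  fixes T :: nat and p :: "nat \<Rightarrow> real" and x :: "nat \<Rightarrow> bool"
  assumes "\<forall>t<T. p t \<in> {0..1}"
  shows "MaxAgentReg T p x / 2 \<le> VCal T p x \<and> VCal T p x \<le> MaxAgentReg T p x"
proof
  have ne: "bounded_proper_rules \<noteq> {}"
  proof -
    have "(\<lambda>_ _. 0) \<in> bounded_proper_rules"
      by (auto simp: bounded_proper_rules_def proper_def exp_score_def)
    then show ?thesis by blast
  qed
  have "MaxAgentReg T p x \<le> 2 * VCal T p x"
    unfolding MaxAgentReg_def
    by (rule cSUP_least[OF ne]) (rule main_bound[OF assms])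
  then show "MaxAgentReg T p x / 2 \<le> VCal T p x" by simp
  show "VCal T p x \<le> MaxAgentReg T p x"
    unfolding VCal_def
  proof (rule cSUP_least)
    show "{0..1::real} \<noteq> {}" by simp
    fix v :: real assume "v \<in> {0..1}"
    then show "Reg (vshaped v) T p x \<le> MaxAgentReg T p x"
      unfolding MaxAgentReg_def
      by (rule cSUP_upper[OF vshaped_in MAR_bdd[OF assms]])
  qed
qed

end
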